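(* Let $\mathfrak{g}_0$ be the noncompact real form of $\mathfrak{g}_2$ with $\mathfrak{k}_0=\mathfrak{su}(2)\oplus\mathfrak{su}(2)$, and let $\rho_1=(-1,-2,3)$, $\rho_2=(1,-3,2)$, $\rho_3=(2,-3,1)$. The admissible $\Theta$-stable parabolic subalgebras $\mathfrak{q}$ of $\mathfrak{g}$ with $\mathfrak{l}_0$ having no compact factors, their faces $\Phi_H$ and the sets $\Phi_H\cap C_\mathfrak{k}$ (the infinitesimal characters of the Dirac cohomology of $A_\mathfrak{q}$) are exactly: (a) the three Borel subalgebras with $\mathfrak{l}=\mathfrak{t}$, defined by $H=\rho_i$ ($i=1,2,3$), giving the discrete series, with $\Phi_H=\Phi_H\cap C_\mathfrak{k}=\{\rho_i\}$; (b) $\mathfrak{q}=\mathfrak{g}$ ($H=0$), giving the trivial module, with $\Phi_H\cap C_\mathfrak{k}=\{\rho_1,\rho_2,\rho_3\}$; (c) $\mathfrak{q}_1$ with $H=(1,-2,1)$ and $\mathfrak{l}=\mathfrak{t}\oplus\mathfrak{g}_{-\epsilon_1+\epsilon_3}\oplus\mathfrak{g}_{\epsilon_1-\epsilon_3}$, with $\Phi_1=\{(2,-3,1),(1,-3,2)\}$ and $\Phi_1\cap C_\mathfrak{k}=\{\rho_2,\rho_3\}$; (d) $\mathfrak{q}_2$ with $H=(0,-1,1)$ and $\mathfrak{l}=\mathfrak{t}\oplus\mathfrak{g}_{-2\epsilon_1+\epsilon_2+\epsilon_3}\oplus\mathfrak{g}_{2\epsilon_1-\epsilon_2-\epsilon_3}$,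 with $\Phi_2=\{(-1,-2,3),(1,-3,2)\}$ and $\Phi_2\cap C_\mathfrak{k}=\{\rho_1,\rho_2\}$. All these $A_\mathfrak{q}$ modules are distinguished by their Dirac cohomology.
   Context: Identify $i\mathfrak{t}_0\cong\mathfrak{t}^*_\mathbb{R}$ with $\{(x_1,x_2,x_3)\in\mathbb{R}^3: x_1+x_2+x_3=0\}$ via the standard inner product, $\mu(H)=\langle\mu,H\rangle$. The roots of $\mathfrak{g}_2$ are $\pm$ the standard positive roots $\epsilon_1-\epsilon_2,\ -\epsilon_1+\epsilon_3,\ -\epsilon_2+\epsilon_3,\ -2\epsilon_1+\epsilon_2+\epsilon_3,\ -\epsilon_1-\epsilon_2+2\epsilon_3,\ \epsilon_1-2\epsilon_2+\epsilon_3$; the Weyl group $W$ is dihedral of order 12. The compact roots are $\pm(\epsilon_1-\epsilon_2)$, $\pm(-\epsilon_1-\epsilon_2+2\epsilon_3)$, with $\Delta^+_\mathfrak{k}=\{\epsilon_1-\epsilon_2,-\epsilon_1-\epsilon_2+2\epsilon_3\}$; so $H$ is $\mathfrak{k}$-dominant iff $H_2\leq H_1\leq -H_2$, and $C_\mathfrak{k}$ is this chamber. $\rho_1,\rho_2,\rho_3$ are the half sums of positive roots of the three positive systems containing $\Delta^+_\mathfrak{k}$ ($\rho_1$ for the standard one); $\rho=\rho_1$. For $H$: $\mathfrak{l}=\mathfrak{t}\oplus\bigoplus_{\alpha(H)=0}\mathfrak{g}_\alpha$, $\mathfrak{u}=\bigoplus_{\alpha(H)>0}\mathfrak{g}_\alpha$,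 $\mathfrak{q}=\mathfrak{l}\oplus\mathfrak{u}$, admissible if $H$ is $\mathfrak{k}$-dominant; $\mathfrak{l}_0=\mathfrak{l}\cap\mathfrak{g}_0$, "no compact factors" means no compact simple ideal. Face $\Phi_H=\{\mu\in W\rho:\mu(H)\geq\nu(H)\ \forall\nu\in W\rho\}$. $A_\mathfrak{q}=A_\mathfrak{q}(0)$ Vogan–Zuckerman module; its Dirac cohomology consists of $\widetilde K$-types with infinitesimal characters in $\Phi_H\cap C_\mathfrak{k}$. *)

theory Defs
  imports "HOL-Analysis.Analysis"
begin

text \<open>The real dual of the compact Cartan subalgebra, identified with the
plane x1+x2+x3 = 0 in R^3 via the standard inner product.\<close>

definition v3 :: "real \<Rightarrow> real \<Rightarrow> real \<Rightarrow> real^3" where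
  "v3 a b c = vector [a, b, c]"

definition tplane :: "(real^3) set" where
  "tplane = {x. x $ 1 + x $ 2 + x $ 3 = 0}"

definition pos_roots :: "(real^3) set" where
  "pos_roots = {v3 1 (-1) 0, v3 (-1) 0 1, v3 0 (-1) 1, v3 (-2) 1 1,
                v3 (-1) (-1) 2, v3 1 (-2) 1}"

definition roots :: "(real^3) set" where
  "roots = pos_roots \<union> uminus ` pos_roots"

definition compact_roots :: "(real^3) set" where
  "compact_roots = {v3 1 (-1) 0, v3 (-1) 1 0, v3 (-1) (-1) 2, v3 1 1 (-2)}"

definition pos_k_roots :: "(real^3) set" where
  "pos_k_roots = {v3 1 (-1) 0, v3 (-1) (-1) 2}"

definition k_dominant :: "real^3 \<Rightarrow> bool" where
  "k_dominant H \<longleftrightarrow> (\<forall>\<alpha>\<in>pos_k_roots. \<alpha> \<bullet> H \<ge> 0)"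

definition C_k :: "(real^3) set" where
  "C_k = {x \<in> tplane. k_dominant x}"

definition rho :: "real^3" where
  "rho = (1/2) *\<^sub>R (\<Sum>\<alpha>\<in>pos_roots. \<alpha>)"

definition refl :: "real^3 \<Rightarrow> real^3 \<Rightarrow> real^3" where
  "refl \<alpha> x = x - (2 * (x \<bullet> \<alpha>) / (\<alpha> \<bullet> \<alpha>)) *\<^sub>R \<alpha>"

inductive_set W_orbit :: "real^3 \<Rightarrow> (real^3) set" for v where
  base: "v \<in> W_orbit v"
| step: "x \<in> W_orbit v \<Longrightarrow> \<alpha> \<in> roots \<Longrightarrow> refl \<alpha> x \<in> W_orbit v"

definition W_rho :: "(real^3) set" where
  "W_rho = W_orbit rho"

text \<open>Theta-stable parabolic q = l + u defined by H, recorded by its root data: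
roots of l (alpha(H) = 0), of u (alpha(H) > 0); q itself is determined by the
set of roots alpha with alpha(H) >= 0.\<close>
definition l_roots :: "real^3 \<Rightarrow> (real^3) set" where
  "l_roots H = {\<alpha> \<in> roots. \<alpha> \<bullet> H = 0}"

definition u_roots :: "real^3 \<Rightarrow> (real^3) set" where
  "u_roots H = {\<alpha> \<in> roots. \<alpha> \<bullet> H > 0}"

definition q_roots :: "real^3 \<Rightarrow> (real^3) set" where
  "q_roots H = {\<alpha> \<in> roots. \<alpha> \<bullet> H \<ge> 0}"

definition admissible :: "real^3 \<Rightarrow> bool" where
  "admissible H \<longleftrightarrow> H \<in> tplane \<and> k_dominant H"

text \<open>Simple ideals of [l,l] correspond to irreducible components of the root
system of l: minimal nonempty subsets orthogonal to the rest.  Such an ideal of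
l_0 is compact iff all its roots are compact.\<close>
definition orth_closed :: "(real^3) set \<Rightarrow> (real^3) set \<Rightarrow> bool" where
  "orth_closed R S \<longleftrightarrow> S \<noteq> {} \<and> S \<subseteq> R \<and> (\<forall>\<alpha>\<in>S. \<forall>\<beta>\<in>R - S. \<alpha> \<bullet> \<beta> = 0)"

definition irred_component :: "(real^3) set \<Rightarrow> (real^3) set \<Rightarrow> bool" where
  "irred_component R S \<longleftrightarrow> orth_closed R S \<and> (\<forall>S'. S' \<subset> S \<longrightarrow> \<not> orth_closed R S')"

definition no_compact_factors :: "real^3 \<Rightarrow> bool" where
  "no_compact_factors H \<longleftrightarrow>
     \<not> (\<exists>S. irred_component (l_roots H) S \<and> S \<subseteq> compact_roots)"

definition face :: "real^3 \<Rightarrow> (real^3) set" where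
  "face H = {\<mu> \<in> W_rho. \<forall>\<nu>\<in>W_rho. \<mu> \<bullet> H \<ge> \<nu> \<bullet> H}"

end

theory Submission
  imports Defs begin

lemma v3_nth [simp]: "v3 a b c $ 1 = a" "v3 a b c $ 2 = b" "v3 a b c $ 3 = c"
  by (simp_all add: v3_def)

lemma v3_eq [simp]: "v3 a b c = v3 a' b' c' \<longleftrightarrow> a = a' \<and> b = b' \<and> c = c'"
  by (auto simp: vec_eq_iff forall_3)

lemma v3_eta: "x = v3 (x$1) (x$2) (x$3)"
  by (simp add: vec_eq_iff forall_3)

lemma v3_inner [simp]: "v3 a b c \<bullet> v3 x y z = a*x + b*y + c*z"
  by (simp add: inner_vec_def sum_3)

lemma v3_neg [simp]: "- v3 a b c = v3 (-a) (-b) (-c)"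
  by (simp add: vec_eq_iff forall_3)

lemma v3_zero: "(0::real^3) = v3 0 0 0"
  by (simp add: vec_eq_iff forall_3)

lemma v3_add [simp]: "v3 a b c + v3 x y z = v3 (a+x) (b+y) (c+z)"
  by (simp add: vec_eq_iff forall_3)

lemma v3_scale [simp]: "r *\<^sub>R v3 a b c = v3 (r*a) (r*b) (r*c)"
  by (simp add: vec_eq_iff forall_3)

lemma v3_diff [simp]: "v3 a b c - v3 x y z = v3 (a-x) (b-y) (c-z)"
  by (simp add: vec_eq_iff forall_3)

lemma refl_v3: "refl (v3 a b c) (v3 x y z) =
  (let k = 2*(x*a+y*b+z*c)/(a*a+b*b+c*c) in v3 (x - k*a) (y - k*b) (z - k*c))"
  by (simp add: refl_def Let_def)

lemma roots_eq: "roots = {v3 1 (-1) 0, v3 (-1) 0 1, v3 0 (-1) 1, v3 (-2) 1 1,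
                v3 (-1) (-1) 2, v3 1 (-2) 1, v3 (-1) 1 0, v3 1 0 (-1), v3 0 1 (-1), v3 2 (-1) (-1),
                v3 1 1 (-2), v3 (-1) 2 (-1)}"
  by (simp add: roots_def pos_roots_def insert_commute)

definition S12 :: "(real^3) set" where
 "S12 = {v3 (-1) (-2) 3, v3 (-2) (-1) 3, v3 3 (-2) (-1), v3 (-1) 3 (-2), v3 1 (-3) 2, v3 2 1 (-3),
         v3 (-3) 2 1, v3 3 (-1) (-2), v3 (-2) 3 (-1), v3 2 (-3) 1, v3 1 2 (-3), v3 (-3) 1 2}"

lemma rho_eq: "rho = v3 (-1) (-2) 3"
  by (simp add: rho_def pos_roots_def v3_zero)

lemma orbit_sub: "x \<in> W_orbit v \<Longrightarrow> v \<in> S12 \<Longrightarrow> x \<in> S12"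
proof (induction rule: W_orbit.induct)
  case base then show ?case by simp
next
  case (step x \<alpha>)
  then have "x \<in> S12" by simp
  with step(2) show ?case
    unfolding S12_def roots_eq
    by (elim insertE emptyE; simp add: refl_v3 Let_def)
qed


lemma W_step: "x \<in> W_orbit v \<Longrightarrow> \<alpha> \<in> roots \<Longrightarrow> refl \<alpha> x = y \<Longrightarrow> y \<in> W_orbit v"
  using W_orbit.step by blast

lemma W_rho_eq: "W_rho = S12"
proof
  show "W_rho \<subseteq> S12" unfolding W_rho_def using orbit_sub by (auto simp: rho_eq S12_def)
next
  have r0: "v3 (-1) (-2) 3 \<in> W_rho" unfolding W_rho_def rho_eq by (rule W_orbit.base)
  have r1: "v3 (-2) (-1) 3 \<in> W_rho" unfolding W_rho_def by (rule W_step[OF r0[unfolded W_rho_def], of "v3 1 (-1) 0"]) (simp_all add: roots_eq refl_v3 Let_def)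
  have r2: "v3 3 (-2) (-1) \<in> W_rho" unfolding W_rho_def by (rule W_step[OF r0[unfolded W_rho_def], of "v3 (-1) 0 1"]) (simp_all add: roots_eq refl_v3 Let_def)
  have r3: "v3 (-1) 3 (-2) \<in> W_rho" unfolding W_rho_def by (rule W_step[OF r0[unfolded W_rho_def], of "v3 0 (-1) 1"]) (simp_all add: roots_eq refl_v3 Let_def)
  have r4: "v3 1 (-3) 2 \<in> W_rho" unfolding W_rho_def by (rule W_step[OF r0[unfolded W_rho_def], of "v3 (-2) 1 1"]) (simp_all add: roots_eq refl_v3 Let_def)
  have r5: "v3 2 1 (-3) \<in> W_rho" unfolding W_rho_def by (rule W_step[OF r0[unfolded W_rho_def], of "v3 (-1) (-1) 2"]) (simp_all add: roots_eq refl_v3 Let_def)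
  have r6: "v3 (-3) 2 1 \<in> W_rho" unfolding W_rho_def by (rule W_step[OF r0[unfolded W_rho_def], of "v3 1 (-2) 1"]) (simp_all add: roots_eq refl_v3 Let_def)
  have r7: "v3 3 (-1) (-2) \<in> W_rho" unfolding W_rho_def by (rule W_step[OF r1[unfolded W_rho_def], of "v3 (-1) 0 1"]) (simp_all add: roots_eq refl_v3 Let_def)
  have r8: "v3 (-2) 3 (-1) \<in> W_rho" unfolding W_rho_def by (rule W_step[OF r1[unfolded W_rho_def], of "v3 0 (-1) 1"]) (simp_all add: roots_eq refl_v3 Let_def)
  have r9: "v3 2 (-3) 1 \<in> W_rho" unfolding W_rho_def by (rule W_step[OF r1[unfolded W_rho_def], of "v3 (-2) 1 1"]) (simp_all add: roots_eq refl_v3 Let_def)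
  have r10: "v3 1 2 (-3) \<in> W_rho" unfolding W_rho_def by (rule W_step[OF r1[unfolded W_rho_def], of "v3 (-1) (-1) 2"]) (simp_all add: roots_eq refl_v3 Let_def)
  have r11: "v3 (-3) 1 2 \<in> W_rho" unfolding W_rho_def by (rule W_step[OF r1[unfolded W_rho_def], of "v3 1 (-2) 1"]) (simp_all add: roots_eq refl_v3 Let_def)
  show "S12 \<subseteq> W_rho" unfolding S12_def using r0 r1 r2 r3 r4 r5 r6 r7 r8 r9 r10 r11 by simp
qed

lemma psub2: assumes "S' \<subset> {a, b}" shows "S' = {} \<or> S' = {a} \<or> S' = {b}"
proof -
  have s: "S' \<subseteq> {a,b}" "S' \<noteq> {a,b}" using assms by auto
  show ?thesis
  proof (cases "a \<in> S'")
    case True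
    then have "b \<notin> S' \<or> a = b" using s by blast
    then show ?thesis using s True by blast
  next
    case False
    then show ?thesis using s by blast
  qed
qed

lemma q_roots_cong: "(\<And>\<alpha>. \<alpha> \<in> roots \<Longrightarrow> (0 \<le> \<alpha> \<bullet> H \<longleftrightarrow> 0 \<le> \<alpha> \<bullet> X)) \<Longrightarrow> q_roots H = q_roots X"
  unfolding q_roots_def by auto

lemma compact_bad:
  assumes "l_roots H = {r, -r}" "r \<in> compact_roots" "-r \<in> compact_roots" "r \<bullet> r \<noteq> 0"
  shows "\<not> no_compact_factors H"
proof -
  have ne: "r \<noteq> -r"
  proof
    assume h: "r = -r"
    have "r \<bullet> r = r \<bullet> (-r)" using h by (rule arg_cong)
    also have "\<dots> = - (r \<bullet> r)" by (rule inner_minus_right)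
    finally show False using assms(4) by linarith
  qed
  have rr: "r \<bullet> -r \<noteq> 0" "-r \<bullet> r \<noteq> 0" using assms(4) by (simp_all add: inner_minus_right inner_minus_left)
  have oc: "orth_closed {r,-r} {r,-r}" unfolding orth_closed_def by (rule conjI, blast, rule conjI, rule subset_refl, simp)
  have "\<not> orth_closed {r,-r} S'" if "S' \<subset> {r, -r}" for S'
  proof -
    from psub2[OF that] have "S' = {} \<or> S' = {r} \<or> S' = {-r}" .
    then show ?thesis
    proof (elim disjE)
      assume "S' = {}" then show ?thesis by (simp add: orth_closed_def)
    next
      assume S: "S' = {r}"
      have "-r \<in> {r,-r} - S'" using S ne by auto
      then show ?thesis using rr S unfolding orth_closed_def by blast
    next
      assume S: "S' = {-r}"
      have "r \<in> {r,-r} - S'" using S ne by auto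
      then show ?thesis using rr S unfolding orth_closed_def by blast
    qed
  qed
  then have "irred_component {r,-r} {r,-r}"
    using oc unfolding irred_component_def by blast
  moreover have "{r,-r} \<subseteq> compact_roots" using assms(2,3) by simp
  ultimately show ?thesis unfolding no_compact_factors_def assms(1) by blast
qed

lemma borel_good: "l_roots H = {} \<Longrightarrow> no_compact_factors H"
  unfolding no_compact_factors_def irred_component_def orth_closed_def by simp

lemma pair_good:
  assumes "l_roots H = {r, -r}" "r \<notin> compact_roots" "-r \<notin> compact_roots"
  shows "no_compact_factors H"
  unfolding no_compact_factors_def
proof
  assume "\<exists>S. irred_component (l_roots H) S \<and> S \<subseteq> compact_roots"
  then obtain S where S0: "irred_component (l_roots H) S" "S \<subseteq> compact_roots" by blast
  then have S: "S \<noteq> {}" "S \<subseteq> {r, -r}" "S \<subseteq> compact_roots"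
    unfolding irred_component_def orth_closed_def assms(1) by simp_all
  then obtain x where x: "x \<in> S" by blast
  then have "x \<in> compact_roots" using S(3) by (rule subsetD[rotated])
  moreover have "x \<in> {r, -r}" using x S(2) by (rule subsetD[rotated])
  ultimately show False using assms(2,3) by (cases "x = r") simp_all
qed
lemma zero_good: "no_compact_factors 0"
proof -
  have l0: "l_roots 0 = roots" by (simp add: l_roots_def)
  have "\<not> S \<subseteq> compact_roots" if "orth_closed roots S" for S
  proof
    assume sub: "S \<subseteq> compact_roots"
    from that obtain a where a: "a \<in> S" unfolding orth_closed_def by auto
    have oc: "\<And>b. b \<in> roots \<Longrightarrow> a \<bullet> b \<noteq> 0 \<Longrightarrow> b \<in> S"
      using that a unfolding orth_closed_def by blast
    have "a \<in> compact_roots" using a sub by auto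
    have w1: "v3 (-1) 0 1 \<in> roots" "v3 1 0 (-1) \<in> roots" by (simp_all add: roots_eq)
    have w2: "v3 (-1) 0 1 \<notin> compact_roots" "v3 1 0 (-1) \<notin> compact_roots"
      by (simp_all add: compact_roots_def)
    from \<open>a \<in> compact_roots\<close> have "\<exists>b\<in>roots. a \<bullet> b \<noteq> 0 \<and> b \<notin> compact_roots"
      unfolding compact_roots_def
      apply (elim insertE emptyE)
         apply (rule bexI[OF _ w1(1)], simp add: w2)
        apply (rule bexI[OF _ w1(2)], simp add: w2)
       apply (rule bexI[OF _ w1(1)], simp add: w2)
      apply (rule bexI[OF _ w1(2)], simp add: w2)
      done
    then show False using oc sub by blast
  qed
  note key = this
  show ?thesis unfolding no_compact_factors_def l0
  proof
    assume "\<exists>S. irred_component roots S \<and> S \<subseteq> compact_roots"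
    then obtain S where "irred_component roots S" "S \<subseteq> compact_roots" by blast
    then have "orth_closed roots S" "S \<subseteq> compact_roots" by (simp_all add: irred_component_def)
    then show False using key by blast
  qed
qed
lemma mem_l: "x \<in> l_roots H \<longleftrightarrow> x \<in> roots \<and> x \<bullet> H = 0"
  by (simp add: l_roots_def)

lemma adm_v3: "admissible (v3 a b c) \<longleftrightarrow> a + b + c = 0 \<and> 0 \<le> a - b \<and> 0 \<le> -a - b + 2*c"
  by (simp add: admissible_def tplane_def k_dominant_def pos_k_roots_def)

lemma l_rho1: "l_roots (v3 (-1) (-2) 3) = {}"
  by (auto simp: mem_l roots_eq)
lemma l_rho2: "l_roots (v3 1 (-3) 2) = {}"
  by (auto simp: mem_l roots_eq)
lemma l_rho3: "l_roots (v3 2 (-3) 1) = {}"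
  by (auto simp: mem_l roots_eq)
lemma l_H1: "l_roots (v3 1 (-2) 1) = {v3 (-1) 0 1, v3 1 0 (-1)}"
  by (auto simp: mem_l roots_eq)
lemma l_H2: "l_roots (v3 0 (-1) 1) = {v3 (-2) 1 1, v3 2 (-1) (-1)}"
  by (auto simp: mem_l roots_eq)

lemma classify:
  assumes "admissible H" "no_compact_factors H"
  shows "q_roots H \<in> {q_roots (v3 (-1) (-2) 3), q_roots (v3 1 (-3) 2), q_roots (v3 2 (-3) 1),
     q_roots 0, q_roots (v3 1 (-2) 1), q_roots (v3 0 (-1) 1)}"
proof -
  obtain a b c where H: "H = v3 a b c" using v3_eta by blast
  have c: "c = -a-b" and k1: "b \<le> a" and k2: "a \<le> -b"
    using assms(1) unfolding H adm_v3 by linarith+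
  have cong: "q_roots (v3 a b c) = q_roots X"
    if "\<And>x y z. v3 x y z \<in> roots \<Longrightarrow> (0 \<le> x*a + y*b + z*c \<longleftrightarrow> 0 \<le> v3 x y z \<bullet> X)" for X
  proof (rule q_roots_cong)
    fix \<alpha> assume "\<alpha> \<in> roots"
    moreover obtain x y z where "\<alpha> = v3 x y z" using v3_eta by blast
    ultimately show "(0 \<le> \<alpha> \<bullet> v3 a b c \<longleftrightarrow> 0 \<le> \<alpha> \<bullet> X)" using that by simp
  qed
  consider "a = b" "b = 0" | "a = b" "b < 0" | "a = -b" "b < 0" | "b < a" "a < 0" | "a = 0" "b < 0"
    | "0 < a" "2*a < -b" | "0 < a" "2*a = -b" | "-b < 2*a" "a < -b"
    using k1 k2 by linarith
  then show ?thesis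
  proof cases
    case 1 then have "H = 0" using c H by (simp add: v3_zero)
    then show ?thesis by simp
  next
    case 2
    have "l_roots H = {v3 1 (-1) 0, - v3 1 (-1) 0}"
      unfolding H using 2 c by (auto simp: mem_l roots_eq)
    from compact_bad[OF this] assms(2) show ?thesis by (simp add: compact_roots_def)
  next
    case 3
    have "l_roots H = {v3 (-1) (-1) 2, - v3 (-1) (-1) 2}"
      unfolding H using 3 c by (auto simp: mem_l roots_eq)
    from compact_bad[OF this] assms(2) show ?thesis by (simp add: compact_roots_def)
  next
    case 4
    have "q_roots H = q_roots (v3 (-1) (-2) 3)" unfolding H
      by (rule cong) (use 4 c in \<open>auto simp: roots_eq\<close>)
    then show ?thesis by simp
  next
    case 5
    have "q_roots H = q_roots (v3 0 (-1) 1)" unfolding H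
      by (rule cong) (use 5 c in \<open>auto simp: roots_eq\<close>)
    then show ?thesis by simp
  next
    case 6
    have "q_roots H = q_roots (v3 1 (-3) 2)" unfolding H
      by (rule cong) (use 6 c in \<open>auto simp: roots_eq\<close>)
    then show ?thesis by simp
  next
    case 7
    have "q_roots H = q_roots (v3 1 (-2) 1)" unfolding H
      by (rule cong) (use 7 c in \<open>auto simp: roots_eq\<close>)
    then show ?thesis by simp
  next
    case 8
    have "q_roots H = q_roots (v3 2 (-3) 1)" unfolding H
      by (rule cong) (use 8 c in \<open>auto simp: roots_eq\<close>)
    then show ?thesis by simp
  qed
qed
lemma mem_face: "x \<in> face H \<longleftrightarrow> x \<in> S12 \<and> (\<forall>\<nu>\<in>S12. \<nu> \<bullet> H \<le> x \<bullet> H)"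
  by (simp add: face_def W_rho_eq)

lemma Ck_v3: "v3 a b c \<in> C_k \<longleftrightarrow> a + b + c = 0 \<and> 0 \<le> a - b \<and> 0 \<le> -a - b + 2*c"
  by (simp add: C_k_def tplane_def k_dominant_def pos_k_roots_def)

lemma face_rho1: "face (v3 (-1) (-2) 3) = {v3 (-1) (-2) 3}"
  by (auto simp: mem_face S12_def)
lemma face_rho2: "face (v3 1 (-3) 2) = {v3 1 (-3) 2}"
  by (auto simp: mem_face S12_def)
lemma face_rho3: "face (v3 2 (-3) 1) = {v3 2 (-3) 1}"
  by (auto simp: mem_face S12_def)
lemma face_H1: "face (v3 1 (-2) 1) = {v3 2 (-3) 1, v3 1 (-3) 2}"
  by (auto simp: mem_face S12_def)
lemma face_H2: "face (v3 0 (-1) 1) = {v3 (-1) (-2) 3, v3 1 (-3) 2}"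
  by (auto simp: mem_face S12_def)
lemma face_0: "face 0 = S12"
  by (auto simp: mem_face)
lemma S12_Ck: "S12 \<inter> C_k = {v3 (-1) (-2) 3, v3 1 (-3) 2, v3 2 (-3) 1}"
  by (auto simp: S12_def Ck_v3)
lemma neq_by: "x \<in> A \<Longrightarrow> x \<notin> B \<Longrightarrow> A \<noteq> B" by blast
lemma mem_q: "x \<in> q_roots H \<longleftrightarrow> x \<in> roots \<and> 0 \<le> x \<bullet> H" by (simp add: q_roots_def)
lemma qne_r1_r2: "q_roots (v3 (-1) (-2) 3) \<noteq> q_roots (v3 1 (-3) 2)" by (rule neq_by[of "v3 (-2) 1 1"]) (simp_all add: mem_q roots_eq v3_zero)
lemma qne_r1_r3: "q_roots (v3 (-1) (-2) 3) \<noteq> q_roots (v3 2 (-3) 1)" by (rule neq_by[of "v3 (-1) 0 1"]) (simp_all add: mem_q roots_eq v3_zero)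
lemma qne_r1_z: "q_roots (v3 (-1) (-2) 3) \<noteq> q_roots 0" by (rule neq_by[of "v3 1 0 (-1)", THEN not_sym]) (simp_all add: mem_q roots_eq v3_zero)
lemma qne_r1_h1: "q_roots (v3 (-1) (-2) 3) \<noteq> q_roots (v3 1 (-2) 1)" by (rule neq_by[of "v3 (-2) 1 1"]) (simp_all add: mem_q roots_eq v3_zero)
lemma qne_r1_h2: "q_roots (v3 (-1) (-2) 3) \<noteq> q_roots (v3 0 (-1) 1)" by (rule neq_by[of "v3 2 (-1) (-1)", THEN not_sym]) (simp_all add: mem_q roots_eq v3_zero)
lemma qne_r2_r1: "q_roots (v3 1 (-3) 2) \<noteq> q_roots (v3 (-1) (-2) 3)" by (rule neq_by[of "v3 2 (-1) (-1)"]) (simp_all add: mem_q roots_eq v3_zero)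
lemma qne_r2_r3: "q_roots (v3 1 (-3) 2) \<noteq> q_roots (v3 2 (-3) 1)" by (rule neq_by[of "v3 (-1) 0 1"]) (simp_all add: mem_q roots_eq v3_zero)
lemma qne_r2_z: "q_roots (v3 1 (-3) 2) \<noteq> q_roots 0" by (rule neq_by[of "v3 1 0 (-1)", THEN not_sym]) (simp_all add: mem_q roots_eq v3_zero)
lemma qne_r2_h1: "q_roots (v3 1 (-3) 2) \<noteq> q_roots (v3 1 (-2) 1)" by (rule neq_by[of "v3 1 0 (-1)", THEN not_sym]) (simp_all add: mem_q roots_eq v3_zero)
lemma qne_r2_h2: "q_roots (v3 1 (-3) 2) \<noteq> q_roots (v3 0 (-1) 1)" by (rule neq_by[of "v3 (-2) 1 1", THEN not_sym]) (simp_all add: mem_q roots_eq v3_zero)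
lemma qne_r3_r1: "q_roots (v3 2 (-3) 1) \<noteq> q_roots (v3 (-1) (-2) 3)" by (rule neq_by[of "v3 1 0 (-1)"]) (simp_all add: mem_q roots_eq v3_zero)
lemma qne_r3_r2: "q_roots (v3 2 (-3) 1) \<noteq> q_roots (v3 1 (-3) 2)" by (rule neq_by[of "v3 1 0 (-1)"]) (simp_all add: mem_q roots_eq v3_zero)
lemma qne_r3_z: "q_roots (v3 2 (-3) 1) \<noteq> q_roots 0" by (rule neq_by[of "v3 (-1) 0 1", THEN not_sym]) (simp_all add: mem_q roots_eq v3_zero)
lemma qne_r3_h1: "q_roots (v3 2 (-3) 1) \<noteq> q_roots (v3 1 (-2) 1)" by (rule neq_by[of "v3 (-1) 0 1", THEN not_sym]) (simp_all add: mem_q roots_eq v3_zero)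
lemma qne_r3_h2: "q_roots (v3 2 (-3) 1) \<noteq> q_roots (v3 0 (-1) 1)" by (rule neq_by[of "v3 1 0 (-1)"]) (simp_all add: mem_q roots_eq v3_zero)
lemma qne_z_r1: "q_roots 0 \<noteq> q_roots (v3 (-1) (-2) 3)" by (rule neq_by[of "v3 1 0 (-1)"]) (simp_all add: mem_q roots_eq v3_zero)
lemma qne_z_r2: "q_roots 0 \<noteq> q_roots (v3 1 (-3) 2)" by (rule neq_by[of "v3 1 0 (-1)"]) (simp_all add: mem_q roots_eq v3_zero)
lemma qne_z_r3: "q_roots 0 \<noteq> q_roots (v3 2 (-3) 1)" by (rule neq_by[of "v3 (-1) 0 1"]) (simp_all add: mem_q roots_eq v3_zero)
lemma qne_z_h1: "q_roots 0 \<noteq> q_roots (v3 1 (-2) 1)" by (rule neq_by[of "v3 (-2) 1 1"]) (simp_all add: mem_q roots_eq v3_zero)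
lemma qne_z_h2: "q_roots 0 \<noteq> q_roots (v3 0 (-1) 1)" by (rule neq_by[of "v3 1 0 (-1)"]) (simp_all add: mem_q roots_eq v3_zero)
lemma qne_h1_r1: "q_roots (v3 1 (-2) 1) \<noteq> q_roots (v3 (-1) (-2) 3)" by (rule neq_by[of "v3 1 0 (-1)"]) (simp_all add: mem_q roots_eq v3_zero)
lemma qne_h1_r2: "q_roots (v3 1 (-2) 1) \<noteq> q_roots (v3 1 (-3) 2)" by (rule neq_by[of "v3 1 0 (-1)"]) (simp_all add: mem_q roots_eq v3_zero)
lemma qne_h1_r3: "q_roots (v3 1 (-2) 1) \<noteq> q_roots (v3 2 (-3) 1)" by (rule neq_by[of "v3 (-1) 0 1"]) (simp_all add: mem_q roots_eq v3_zero)
lemma qne_h1_z: "q_roots (v3 1 (-2) 1) \<noteq> q_roots 0" by (rule neq_by[of "v3 (-2) 1 1", THEN not_sym]) (simp_all add: mem_q roots_eq v3_zero)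
lemma qne_h1_h2: "q_roots (v3 1 (-2) 1) \<noteq> q_roots (v3 0 (-1) 1)" by (rule neq_by[of "v3 1 0 (-1)"]) (simp_all add: mem_q roots_eq v3_zero)
lemma qne_h2_r1: "q_roots (v3 0 (-1) 1) \<noteq> q_roots (v3 (-1) (-2) 3)" by (rule neq_by[of "v3 2 (-1) (-1)"]) (simp_all add: mem_q roots_eq v3_zero)
lemma qne_h2_r2: "q_roots (v3 0 (-1) 1) \<noteq> q_roots (v3 1 (-3) 2)" by (rule neq_by[of "v3 (-2) 1 1"]) (simp_all add: mem_q roots_eq v3_zero)
lemma qne_h2_r3: "q_roots (v3 0 (-1) 1) \<noteq> q_roots (v3 2 (-3) 1)" by (rule neq_by[of "v3 (-1) 0 1"]) (simp_all add: mem_q roots_eq v3_zero)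
lemma qne_h2_z: "q_roots (v3 0 (-1) 1) \<noteq> q_roots 0" by (rule neq_by[of "v3 1 0 (-1)", THEN not_sym]) (simp_all add: mem_q roots_eq v3_zero)
lemma qne_h2_h1: "q_roots (v3 0 (-1) 1) \<noteq> q_roots (v3 1 (-2) 1)" by (rule neq_by[of "v3 (-2) 1 1"]) (simp_all add: mem_q roots_eq v3_zero)
lemma fne_r1_r2: "{v3 (-1) (-2) 3} \<noteq> {v3 1 (-3) 2}" by (rule neq_by[of "v3 (-1) (-2) 3"]) simp_all
lemma fne_r1_r3: "{v3 (-1) (-2) 3} \<noteq> {v3 2 (-3) 1}" by (rule neq_by[of "v3 (-1) (-2) 3"]) simp_all
lemma fne_r1_z: "{v3 (-1) (-2) 3} \<noteq> {v3 (-1) (-2) 3, v3 1 (-3) 2, v3 2 (-3) 1}" by (rule neq_by[of "v3 1 (-3) 2", THEN not_sym]) simp_all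
lemma fne_r1_h1: "{v3 (-1) (-2) 3} \<noteq> {v3 1 (-3) 2, v3 2 (-3) 1}" by (rule neq_by[of "v3 (-1) (-2) 3"]) simp_all
lemma fne_r1_h2: "{v3 (-1) (-2) 3} \<noteq> {v3 (-1) (-2) 3, v3 1 (-3) 2}" by (rule neq_by[of "v3 1 (-3) 2", THEN not_sym]) simp_all
lemma fne_r2_r1: "{v3 1 (-3) 2} \<noteq> {v3 (-1) (-2) 3}" by (rule neq_by[of "v3 1 (-3) 2"]) simp_all
lemma fne_r2_r3: "{v3 1 (-3) 2} \<noteq> {v3 2 (-3) 1}" by (rule neq_by[of "v3 1 (-3) 2"]) simp_all
lemma fne_r2_z: "{v3 1 (-3) 2} \<noteq> {v3 (-1) (-2) 3, v3 1 (-3) 2, v3 2 (-3) 1}" by (rule neq_by[of "v3 (-1) (-2) 3", THEN not_sym]) simp_all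
lemma fne_r2_h1: "{v3 1 (-3) 2} \<noteq> {v3 1 (-3) 2, v3 2 (-3) 1}" by (rule neq_by[of "v3 2 (-3) 1", THEN not_sym]) simp_all
lemma fne_r2_h2: "{v3 1 (-3) 2} \<noteq> {v3 (-1) (-2) 3, v3 1 (-3) 2}" by (rule neq_by[of "v3 (-1) (-2) 3", THEN not_sym]) simp_all
lemma fne_r3_r1: "{v3 2 (-3) 1} \<noteq> {v3 (-1) (-2) 3}" by (rule neq_by[of "v3 2 (-3) 1"]) simp_all
lemma fne_r3_r2: "{v3 2 (-3) 1} \<noteq> {v3 1 (-3) 2}" by (rule neq_by[of "v3 2 (-3) 1"]) simp_all
lemma fne_r3_z: "{v3 2 (-3) 1} \<noteq> {v3 (-1) (-2) 3, v3 1 (-3) 2, v3 2 (-3) 1}" by (rule neq_by[of "v3 (-1) (-2) 3", THEN not_sym]) simp_all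
lemma fne_r3_h1: "{v3 2 (-3) 1} \<noteq> {v3 1 (-3) 2, v3 2 (-3) 1}" by (rule neq_by[of "v3 1 (-3) 2", THEN not_sym]) simp_all
lemma fne_r3_h2: "{v3 2 (-3) 1} \<noteq> {v3 (-1) (-2) 3, v3 1 (-3) 2}" by (rule neq_by[of "v3 2 (-3) 1"]) simp_all
lemma fne_z_r1: "{v3 (-1) (-2) 3, v3 1 (-3) 2, v3 2 (-3) 1} \<noteq> {v3 (-1) (-2) 3}" by (rule neq_by[of "v3 1 (-3) 2"]) simp_all
lemma fne_z_r2: "{v3 (-1) (-2) 3, v3 1 (-3) 2, v3 2 (-3) 1} \<noteq> {v3 1 (-3) 2}" by (rule neq_by[of "v3 (-1) (-2) 3"]) simp_all
lemma fne_z_r3: "{v3 (-1) (-2) 3, v3 1 (-3) 2, v3 2 (-3) 1} \<noteq> {v3 2 (-3) 1}" by (rule neq_by[of "v3 (-1) (-2) 3"]) simp_all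
lemma fne_z_h1: "{v3 (-1) (-2) 3, v3 1 (-3) 2, v3 2 (-3) 1} \<noteq> {v3 1 (-3) 2, v3 2 (-3) 1}" by (rule neq_by[of "v3 (-1) (-2) 3"]) simp_all
lemma fne_z_h2: "{v3 (-1) (-2) 3, v3 1 (-3) 2, v3 2 (-3) 1} \<noteq> {v3 (-1) (-2) 3, v3 1 (-3) 2}" by (rule neq_by[of "v3 2 (-3) 1"]) simp_all
lemma fne_h1_r1: "{v3 1 (-3) 2, v3 2 (-3) 1} \<noteq> {v3 (-1) (-2) 3}" by (rule neq_by[of "v3 1 (-3) 2"]) simp_all
lemma fne_h1_r2: "{v3 1 (-3) 2, v3 2 (-3) 1} \<noteq> {v3 1 (-3) 2}" by (rule neq_by[of "v3 2 (-3) 1"]) simp_all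
lemma fne_h1_r3: "{v3 1 (-3) 2, v3 2 (-3) 1} \<noteq> {v3 2 (-3) 1}" by (rule neq_by[of "v3 1 (-3) 2"]) simp_all
lemma fne_h1_z: "{v3 1 (-3) 2, v3 2 (-3) 1} \<noteq> {v3 (-1) (-2) 3, v3 1 (-3) 2, v3 2 (-3) 1}" by (rule neq_by[of "v3 (-1) (-2) 3", THEN not_sym]) simp_all
lemma fne_h1_h2: "{v3 1 (-3) 2, v3 2 (-3) 1} \<noteq> {v3 (-1) (-2) 3, v3 1 (-3) 2}" by (rule neq_by[of "v3 2 (-3) 1"]) simp_all
lemma fne_h2_r1: "{v3 (-1) (-2) 3, v3 1 (-3) 2} \<noteq> {v3 (-1) (-2) 3}" by (rule neq_by[of "v3 1 (-3) 2"]) simp_all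
lemma fne_h2_r2: "{v3 (-1) (-2) 3, v3 1 (-3) 2} \<noteq> {v3 1 (-3) 2}" by (rule neq_by[of "v3 (-1) (-2) 3"]) simp_all
lemma fne_h2_r3: "{v3 (-1) (-2) 3, v3 1 (-3) 2} \<noteq> {v3 2 (-3) 1}" by (rule neq_by[of "v3 (-1) (-2) 3"]) simp_all
lemma fne_h2_z: "{v3 (-1) (-2) 3, v3 1 (-3) 2} \<noteq> {v3 (-1) (-2) 3, v3 1 (-3) 2, v3 2 (-3) 1}" by (rule neq_by[of "v3 2 (-3) 1", THEN not_sym]) simp_all
lemma fne_h2_h1: "{v3 (-1) (-2) 3, v3 1 (-3) 2} \<noteq> {v3 1 (-3) 2, v3 2 (-3) 1}" by (rule neq_by[of "v3 (-1) (-2) 3"]) simp_all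
lemmas qnes = qne_r1_r2 qne_r1_r3 qne_r1_z qne_r1_h1 qne_r1_h2 qne_r2_r1 qne_r2_r3 qne_r2_z qne_r2_h1 qne_r2_h2 qne_r3_r1 qne_r3_r2 qne_r3_z qne_r3_h1 qne_r3_h2 qne_z_r1 qne_z_r2 qne_z_r3 qne_z_h1 qne_z_h2 qne_h1_r1 qne_h1_r2 qne_h1_r3 qne_h1_z qne_h1_h2 qne_h2_r1 qne_h2_r2 qne_h2_r3 qne_h2_z qne_h2_h1
lemmas fnes = fne_r1_r2 fne_r1_r3 fne_r1_z fne_r1_h1 fne_r1_h2 fne_r2_r1 fne_r2_r3 fne_r2_z fne_r2_h1 fne_r2_h2 fne_r3_r1 fne_r3_r2 fne_r3_z fne_r3_h1 fne_r3_h2 fne_z_r1 fne_z_r2 fne_z_r3 fne_z_h1 fne_z_h2 fne_h1_r1 fne_h1_r2 fne_h1_r3 fne_h1_z fne_h1_h2 fne_h2_r1 fne_h2_r2 fne_h2_r3 fne_h2_z fne_h2_h1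

lemma fC_rho1: "face (v3 (-1) (-2) 3) \<inter> C_k = {v3 (-1) (-2) 3}"
  by (auto simp: face_rho1 Ck_v3)
lemma fC_rho2: "face (v3 1 (-3) 2) \<inter> C_k = {v3 1 (-3) 2}"
  by (auto simp: face_rho2 Ck_v3)
lemma fC_rho3: "face (v3 2 (-3) 1) \<inter> C_k = {v3 2 (-3) 1}"
  by (auto simp: face_rho3 Ck_v3)
lemma fC_H1: "face (v3 1 (-2) 1) \<inter> C_k = {v3 1 (-3) 2, v3 2 (-3) 1}"
  by (auto simp: face_H1 Ck_v3)
lemma fC_H2: "face (v3 0 (-1) 1) \<inter> C_k = {v3 (-1) (-2) 3, v3 1 (-3) 2}"
  by (auto simp: face_H2 Ck_v3)
lemma fC_0: "face 0 \<inter> C_k = {v3 (-1) (-2) 3, v3 1 (-3) 2, v3 2 (-3) 1}"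
  by (simp add: face_0 S12_Ck)

lemma good_all: "\<forall>H\<in>{v3 (-1) (-2) 3, v3 1 (-3) 2, v3 2 (-3) 1, 0, v3 1 (-2) 1, v3 0 (-1) 1}.
   admissible H \<and> no_compact_factors H"
proof -
  have a: "admissible (v3 (-1) (-2) 3)" "admissible (v3 1 (-3) 2)" "admissible (v3 2 (-3) 1)"
    "admissible 0" "admissible (v3 1 (-2) 1)" "admissible (v3 0 (-1) 1)"
    by (simp_all add: adm_v3 v3_zero)
  have n: "no_compact_factors (v3 (-1) (-2) 3)" "no_compact_factors (v3 1 (-3) 2)"
    "no_compact_factors (v3 2 (-3) 1)" "no_compact_factors 0"
    by (simp_all add: borel_good l_rho1 l_rho2 l_rho3 zero_good)
  have "no_compact_factors (v3 1 (-2) 1)"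
    by (rule pair_good[of _ "v3 (-1) 0 1"]) (simp_all add: l_H1 compact_roots_def)
  moreover have "no_compact_factors (v3 0 (-1) 1)"
    by (rule pair_good[of _ "v3 (-2) 1 1"]) (simp_all add: l_H2 compact_roots_def)
  ultimately show ?thesis using a n by simp
qed
lemma main_set: "{q_roots H | H. admissible H \<and> no_compact_factors H}
   = {q_roots (v3 (-1) (-2) 3), q_roots (v3 1 (-3) 2), q_roots (v3 2 (-3) 1), q_roots 0,
      q_roots (v3 1 (-2) 1), q_roots (v3 0 (-1) 1)}" (is "?L = ?R")
proof
  show "?L \<subseteq> ?R" using classify by blast
next
  show "?R \<subseteq> ?L" using good_all by blast
qed

theorem theorem6p1:
  defines "\<rho>1 \<equiv> v3 (-1) (-2) 3" and "\<rho>2 \<equiv> v3 1 (-3) 2" and "\<rho>3 \<equiv> v3 2 (-3) 1"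
      and "H1 \<equiv> v3 1 (-2) 1" and "H2 \<equiv> v3 0 (-1) 1"
  shows "rho = \<rho>1
    \<and> {q_roots H | H. admissible H \<and> no_compact_factors H}
        = {q_roots \<rho>1, q_roots \<rho>2, q_roots \<rho>3, q_roots 0, q_roots H1, q_roots H2}
    \<and> card {q_roots \<rho>1, q_roots \<rho>2, q_roots \<rho>3, q_roots 0, q_roots H1, q_roots H2} = 6
    \<and> (\<forall>H\<in>{\<rho>1, \<rho>2, \<rho>3, 0, H1, H2}. admissible H \<and> no_compact_factors H)
    \<and> (\<forall>r\<in>{\<rho>1, \<rho>2, \<rho>3}. l_roots r = {} \<and> face r = {r} \<and> face r \<inter> C_k = {r})
    \<and> l_roots 0 = roots \<and> face 0 \<inter> C_k = {\<rho>1, \<rho>2, \<rho>3}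
    \<and> l_roots H1 = {v3 (-1) 0 1, v3 1 0 (-1)}
    \<and> face H1 = {v3 2 (-3) 1, v3 1 (-3) 2} \<and> face H1 \<inter> C_k = {\<rho>2, \<rho>3}
    \<and> l_roots H2 = {v3 (-2) 1 1, v3 2 (-1) (-1)}
    \<and> face H2 = {v3 (-1) (-2) 3, v3 1 (-3) 2} \<and> face H2 \<inter> C_k = {\<rho>1, \<rho>2}
    \<and> card ((\<lambda>H. face H \<inter> C_k) ` {\<rho>1, \<rho>2, \<rho>3, 0, H1, H2}) = 6"
  unfolding \<rho>1_def \<rho>2_def \<rho>3_def H1_def H2_def
proof (intro conjI)
  show "rho = v3 (- 1) (- 2) 3" by (rule rho_eq)
  show "card {q_roots (v3 (- 1) (- 2) 3), q_roots (v3 1 (- 3) 2), q_roots (v3 2 (- 3) 1), q_roots 0,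
      q_roots (v3 1 (- 2) 1), q_roots (v3 0 (- 1) 1)} = 6"
    by (simp add: qnes)
  show "card ((\<lambda>H. face H \<inter> C_k) ` {v3 (- 1) (- 2) 3, v3 1 (- 3) 2, v3 2 (- 3) 1, 0, v3 1 (- 2) 1, v3 0 (- 1) 1}) = 6"
    by (simp add: fC_rho1 fC_rho2 fC_rho3 fC_0 fC_H1 fC_H2 fnes)
  show "l_roots 0 = roots" by (simp add: l_roots_def)
qed (simp_all add: main_set good_all l_rho1 l_rho2 l_rho3 face_rho1 face_rho2 face_rho3 fC_rho1 fC_rho2 fC_rho3
      fC_0 l_H1 l_H2 face_H1 face_H2 fC_H1 fC_H2 insert_commute Int_insert_left Ck_v3)
end
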